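(* Let $\vec e=(e_1,e_2,e_3)\in\mathbb{R}^3$ be a unit vector. For every $k\ge1$, the number of non-trivial compositions of order $k$ of operations from $\{\nabla_0,\nabla_1,\nabla_2,\nabla_3\}=\{\mathrm{dir}_{\vec e},\mathrm{grad},\mathrm{curl},\mathrm{div}\}$ in $\mathbb{R}^3$ equals $F_{k+3}+1$, where $F_j$ is the $j$-th Fibonacci number ($F_1=F_2=1$, $F_j=F_{j-1}+F_{j-2}$).
   Context: Let $\mathrm{A}_0=C^\infty(\mathbb{R}^3,\mathbb{R})$ and $\mathrm{A}_1$ the set of maps $\vec f=(f_1,f_2,f_3):\mathbb{R}^3\to\mathbb{R}^3$ with $f_1,f_2,f_3\in C^\infty(\mathbb{R}^3)$. Operators: $\nabla_1=\mathrm{grad}:\mathrm{A}_0\to\mathrm{A}_1$, $\nabla_1 f=(\partial_1 f,\partial_2 f,\partial_3 f)$; $\nabla_2=\mathrm{curl}:\mathrm{A}_1\to\mathrm{A}_1$, $\nabla_2\vec f=(\partial_2f_3-\partial_3f_2,\ \partial_3f_1-\partial_1f_3,\ \partial_1f_2-\partial_2f_1)$; $\nabla_3=\mathrm{div}:\mathrm{A}_1\to\mathrm{A}_0$, $\nabla_3\vec f=\partial_1f_1+\partial_2f_2+\partial_3f_3$; $\nabla_0=\mathrm{dir}_{\vec e}:\mathrm{A}_0\to\mathrm{A}_0$, $\nabla_0f=\nabla_1f\cdot\vec e$ (Gateaux directional derivative). A composition of order $k$ is $\nabla_{i_k}\circ\cdots\circ\nabla_{i_1}$ with $i_j\in\{0,1,2,3\}$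 such that the codomain of each factor equals the domain of the next; it is non-trivial if it is not identically $0$ (resp. $\vec 0$). *)

theory Defs
  imports "HOL-Analysis.Analysis" "HOL-Number_Theory.Fib"
begin

definition pd :: "3 \<Rightarrow> (real^3 \<Rightarrow> real) \<Rightarrow> (real^3 \<Rightarrow> real)" where
  "pd i f = (\<lambda>x. frechet_derivative f (at x) (axis i 1))"

text \<open>C-infinity: all iterated partial derivatives (including f itself) exist and
  are differentiable everywhere.\<close>
definition smooth :: "(real^3 \<Rightarrow> real) \<Rightarrow> bool" where
  "smooth f \<longleftrightarrow> (\<forall>is x. (foldr pd is f) differentiable (at x))"

datatype fld = Sc "real^3 \<Rightarrow> real" | Ve "real^3 \<Rightarrow> real^3"

fun in_A :: "fld \<Rightarrow> bool" where
  "in_A (Sc f) = smooth f"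
| "in_A (Ve F) = (\<forall>j. smooth (\<lambda>x. F x $ j))"

fun is_vec :: "fld \<Rightarrow> bool" where
  "is_vec (Sc f) = False"
| "is_vec (Ve F) = True"

fun nonzero :: "fld \<Rightarrow> bool" where
  "nonzero (Sc f) = (\<exists>x. f x \<noteq> 0)"
| "nonzero (Ve F) = (\<exists>x. F x \<noteq> 0)"

definition grad :: "(real^3 \<Rightarrow> real) \<Rightarrow> real^3 \<Rightarrow> real^3" where
  "grad f x = (\<chi> i. pd i f x)"

definition curl :: "(real^3 \<Rightarrow> real^3) \<Rightarrow> real^3 \<Rightarrow> real^3" where
  "curl F x = vector [pd 2 (\<lambda>y. F y $ 3) x - pd 3 (\<lambda>y. F y $ 2) x,
                      pd 3 (\<lambda>y. F y $ 1) x - pd 1 (\<lambda>y. F y $ 3) x,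
                      pd 1 (\<lambda>y. F y $ 2) x - pd 2 (\<lambda>y. F y $ 1) x]"

definition dvg :: "(real^3 \<Rightarrow> real^3) \<Rightarrow> real^3 \<Rightarrow> real" where
  "dvg F x = pd 1 (\<lambda>y. F y $ 1) x + pd 2 (\<lambda>y. F y $ 2) x + pd 3 (\<lambda>y. F y $ 3) x"

text \<open>Operators nabla_0 = dir_e, nabla_1 = grad, nabla_2 = curl, nabla_3 = div
  (only meaningful on their domains; other cases are junk and never used).\<close>
fun nabla :: "real^3 \<Rightarrow> nat \<Rightarrow> fld \<Rightarrow> fld" where
  "nabla e 0 (Sc f) = Sc (\<lambda>x. grad f x \<bullet> e)"
| "nabla e (Suc 0) (Sc f) = Ve (grad f)"
| "nabla e (Suc (Suc 0)) (Ve F) = Ve (curl F)"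
| "nabla e (Suc (Suc (Suc 0))) (Ve F) = Sc (dvg F)"
| "nabla e _ g = g"

text \<open>Domain / codomain of nabla_i: True = A_1 (vector fields), False = A_0.\<close>
definition dom_vec :: "nat \<Rightarrow> bool" where "dom_vec i \<longleftrightarrow> i = 2 \<or> i = 3"
definition cod_vec :: "nat \<Rightarrow> bool" where "cod_vec i \<longleftrightarrow> i = 1 \<or> i = 2"

text \<open>A composition of order k is a list [i_1,...,i_k], representing
  nabla_{i_k} o ... o nabla_{i_1}.\<close>
definition admissible :: "nat list \<Rightarrow> bool" where
  "admissible is \<longleftrightarrow> set is \<subseteq> {0..3} \<and>
     (\<forall>j. Suc j < length is \<longrightarrow> cod_vec (is ! j) = dom_vec (is ! Suc j))"

definition compose :: "real^3 \<Rightarrow> nat list \<Rightarrow> fld \<Rightarrow> fld" where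
  "compose e is g = foldl (\<lambda>h i. nabla e i h) g is"

definition nontrivial :: "real^3 \<Rightarrow> nat list \<Rightarrow> bool" where
  "nontrivial e is \<longleftrightarrow>
     (\<exists>g. in_A g \<and> is_vec g = dom_vec (hd is) \<and> nonzero (compose e is g))"

end

theory Submission
  imports Defs
begin


lemma line_deriv:
  fixes f :: "'a::real_normed_vector \<Rightarrow> real"
  assumes "f differentiable (at (y + t *\<^sub>R u))"
  shows "((\<lambda>t. f (y + t *\<^sub>R u)) has_real_derivative frechet_derivative f (at (y + t *\<^sub>R u)) u) (at t)"
proof -
  have fd: "(f has_derivative frechet_derivative f (at (y + t *\<^sub>R u))) (at (y + t *\<^sub>R u))"
    using assms frechet_derivative_works by blast
  have ld: "((\<lambda>t. y + t *\<^sub>R u) has_derivative (\<lambda>s. s *\<^sub>R u)) (at t)"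
    by (auto intro!: derivative_eq_intros)
  have "((\<lambda>t. f (y + t *\<^sub>R u)) has_derivative (\<lambda>s. frechet_derivative f (at (y + t *\<^sub>R u)) (s *\<^sub>R u))) (at t)"
    using has_derivative_compose[OF ld fd] by (simp add: o_def)
  moreover have lin: "linear (frechet_derivative f (at (y + t *\<^sub>R u)))"
    using fd has_derivative_linear by blast
  ultimately have "((\<lambda>t. f (y + t *\<^sub>R u)) has_derivative (\<lambda>s. s * frechet_derivative f (at (y + t *\<^sub>R u)) u)) (at t)"
    by (simp add: linear_scale[OF lin])
  moreover have "(\<lambda>s. s * frechet_derivative f (at (y + t *\<^sub>R u)) u) = (*) (frechet_derivative f (at (y + t *\<^sub>R u)) u)"
    by (auto simp: fun_eq_iff mult.commute)
  ultimately show ?thesis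
    by (simp add: has_field_derivative_def)
qed

lemma schwarz_approx:
  fixes f :: "'a::real_normed_vector \<Rightarrow> real"
  assumes df: "\<And>y. f differentiable (at y)"
  and du: "(\<lambda>y. frechet_derivative f (at y) u) differentiable (at x)"
  and ep: "\<epsilon> > 0"
  shows "\<exists>\<delta>>0. \<forall>h. 0 < h \<and> h < \<delta> \<longrightarrow>
    \<bar>f (x + h *\<^sub>R u + h *\<^sub>R v) - f (x + h *\<^sub>R u) - f (x + h *\<^sub>R v) + f x
      - h^2 * frechet_derivative (\<lambda>y. frechet_derivative f (at y) u) (at x) v\<bar>
     \<le> \<epsilon> * h^2 * (2 * norm u + norm v)"
proof -
  define \<phi> where "\<phi> = (\<lambda>y. frechet_derivative f (at y) u)"
  define L where "L = frechet_derivative \<phi> (at x)"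
  have hd: "(\<phi> has_derivative L) (at x)"
    using du frechet_derivative_works unfolding \<phi>_def L_def by blast
  then have bl: "bounded_linear L" and
    "\<forall>e>0. \<exists>d>0. \<forall>y. norm(y - x) < d \<longrightarrow> norm (\<phi> y - \<phi> x - L (y - x)) \<le> e * norm (y - x)"
    unfolding has_derivative_at_alt by auto
  then obtain d where d: "d > 0" and dd: "\<And>y. norm(y - x) < d \<Longrightarrow> \<bar>\<phi> y - \<phi> x - L (y - x)\<bar> \<le> \<epsilon> * norm (y - x)"
    using ep by (metis real_norm_def)
  define \<delta> where "\<delta> = d / (norm u + norm v + 1)"
  have np: "norm u + norm v + 1 > 0" by (smt (verit) norm_ge_zero)
  have \<delta>pos: "\<delta> > 0" unfolding \<delta>_def using d np by simp
  show ?thesis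
  proof (intro exI[of _ \<delta>] conjI allI impI \<delta>pos)
    fix h :: real assume h: "0 < h \<and> h < \<delta>"
    have hnd: "h * (norm u + norm v) < d"
    proof -
      have "h * (norm u + norm v) \<le> h * (norm u + norm v + 1)" using h by simp
      also have "\<dots> < \<delta> * (norm u + norm v + 1)"
        using h by (intro mult_strict_right_mono) (use np in auto)
      also have "\<dots> = d" unfolding \<delta>_def using np by simp
      finally show ?thesis .
    qed
    define g where "g = (\<lambda>t. f ((x + h *\<^sub>R v) + t *\<^sub>R u) - f (x + t *\<^sub>R u))"
    define g' where "g' = (\<lambda>t. \<phi> ((x + h *\<^sub>R v) + t *\<^sub>R u) - \<phi> (x + t *\<^sub>R u))"
    have "\<And>t. DERIV g t :> g' t"
      unfolding g_def g'_def \<phi>_def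
      by (intro DERIV_diff line_deriv df)
    then obtain z where z: "0 < z" "z < h" and gz: "g h - g 0 = (h - 0) * g' z"
      using MVT2[of 0 h g g'] h by blast
    define w1 where "w1 = h *\<^sub>R v + z *\<^sub>R u"
    define w2 where "w2 = z *\<^sub>R u"
    have nw1: "norm w1 \<le> h * norm v + z * norm u"
      unfolding w1_def using z h by (smt (verit) norm_scaleR norm_triangle_ineq)
    have nw2: "norm w2 = z * norm u" unfolding w2_def using z by simp
    have zu: "z * norm u \<le> h * norm u" using z by (simp add: mult_right_mono)
    have "norm ((x + w1) - x) < d" using nw1 zu hnd by (simp add: algebra_simps)
    then have e1: "\<bar>\<phi> (x + w1) - \<phi> x - L w1\<bar> \<le> \<epsilon> * norm w1" using dd by fastforce
    have hu: "h * norm u \<le> h * (norm u + norm v)" using h by (simp add: mult_left_mono)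
    have "norm ((x + w2) - x) < d" using nw2 zu hnd hu by simp
    then have e2: "\<bar>\<phi> (x + w2) - \<phi> x - L w2\<bar> \<le> \<epsilon> * norm w2" using dd by fastforce
    have Lw: "L w1 - L w2 = h * L v"
      unfolding w1_def w2_def using bounded_linear.linear[OF bl]
      by (simp add: linear_add linear_scale)
    have g'z: "g' z = \<phi> (x + w1) - \<phi> (x + w2)"
      unfolding g'_def w1_def w2_def by (simp add: add.assoc)
    have b1: "\<bar>g' z - h * L v\<bar> \<le> \<epsilon> * (norm w1 + norm w2)"
      using e1 e2 Lw g'z by (simp add: abs_le_iff algebra_simps; linarith)
    have "\<epsilon> * (norm w1 + norm w2) \<le> \<epsilon> * (h * norm v + z * norm u + z * norm u)"
      using nw1 nw2 ep by (intro mult_left_mono) auto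
    also have "\<dots> \<le> \<epsilon> * (h * (2 * norm u + norm v))"
      using zu ep by (intro mult_left_mono) (auto simp: algebra_simps)
    finally have b2: "\<bar>g' z - h * L v\<bar> \<le> \<epsilon> * (h * (2 * norm u + norm v))" using b1 by linarith
    have geq: "g h - g 0 = f (x + h *\<^sub>R u + h *\<^sub>R v) - f (x + h *\<^sub>R u) - f (x + h *\<^sub>R v) + f x"
      unfolding g_def by (simp add: algebra_simps)
    have "\<bar>(g h - g 0) - h^2 * L v\<bar> = h * \<bar>g' z - h * L v\<bar>"
    proof -
      have "(g h - g 0) - h^2 * L v = h * (g' z - h * L v)"
        using gz by (simp add: power2_eq_square algebra_simps)
      then show ?thesis using h by (simp add: abs_mult)
    qed
    also have "\<dots> \<le> h * (\<epsilon> * (h * (2 * norm u + norm v)))"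
      using b2 h by (intro mult_left_mono) auto
    finally show "\<bar>f (x + h *\<^sub>R u + h *\<^sub>R v) - f (x + h *\<^sub>R u) - f (x + h *\<^sub>R v) + f x
      - h^2 * frechet_derivative (\<lambda>y. frechet_derivative f (at y) u) (at x) v\<bar>
     \<le> \<epsilon> * h^2 * (2 * norm u + norm v)"
      using geq unfolding L_def \<phi>_def by (simp add: power2_eq_square algebra_simps)
  qed
qed



lemma zero_if_small:
  fixes d C :: real
  assumes C: "C > 0" and H: "\<And>\<epsilon>. \<epsilon> > 0 \<Longrightarrow> \<bar>d\<bar> \<le> \<epsilon> * C"
  shows "d = 0"
proof (rule ccontr)
  assume "d \<noteq> 0"
  then have "\<bar>d\<bar> / (2*C) > 0" using C by simp
  from H[OF this] C show False by (simp add: field_simps) (smt (verit) \<open>d \<noteq> 0\<close>)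
qed

lemma schwarz_gen:
  fixes f :: "'a::real_normed_vector \<Rightarrow> real"
  assumes df: "\<And>y. f differentiable (at y)"
  and du: "(\<lambda>y. frechet_derivative f (at y) u) differentiable (at x)"
  and dv: "(\<lambda>y. frechet_derivative f (at y) v) differentiable (at x)"
  shows "frechet_derivative (\<lambda>y. frechet_derivative f (at y) u) (at x) v
       = frechet_derivative (\<lambda>y. frechet_derivative f (at y) v) (at x) u"
proof -
  define A where "A = frechet_derivative (\<lambda>y. frechet_derivative f (at y) u) (at x) v"
  define B where "B = frechet_derivative (\<lambda>y. frechet_derivative f (at y) v) (at x) u"
  define C where "C = 3 * (norm u + norm v) + 1"
  have Cp: "C > 0" unfolding C_def by (auto intro!: add_nonneg_pos mult_nonneg_nonneg)
  have "A - B = 0"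
  proof (rule zero_if_small[OF Cp])
    fix \<epsilon> :: real assume ep: "\<epsilon> > 0"
    obtain d1 where d1: "d1 > 0" and h1: "\<And>h. 0 < h \<and> h < d1 \<Longrightarrow>
      \<bar>f (x + h *\<^sub>R u + h *\<^sub>R v) - f (x + h *\<^sub>R u) - f (x + h *\<^sub>R v) + f x - h^2 * A\<bar>
       \<le> \<epsilon> * h^2 * (2 * norm u + norm v)"
      using schwarz_approx[OF df du ep, of v] unfolding A_def by blast
    obtain d2 where d2: "d2 > 0" and h2: "\<And>h. 0 < h \<and> h < d2 \<Longrightarrow>
      \<bar>f (x + h *\<^sub>R v + h *\<^sub>R u) - f (x + h *\<^sub>R v) - f (x + h *\<^sub>R u) + f x - h^2 * B\<bar>
       \<le> \<epsilon> * h^2 * (2 * norm v + norm u)"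
      using schwarz_approx[OF df dv ep, of u] unfolding B_def by blast
    define h where "h = min d1 d2 / 2"
    have hp: "0 < h \<and> h < d1" "0 < h \<and> h < d2" unfolding h_def using d1 d2 by auto
    define D where "D = f (x + h *\<^sub>R u + h *\<^sub>R v) - f (x + h *\<^sub>R u) - f (x + h *\<^sub>R v) + f x"
    have "x + h *\<^sub>R v + h *\<^sub>R u = x + h *\<^sub>R u + h *\<^sub>R v" by (simp add: algebra_simps)
    then have a1: "\<bar>D - h^2 * A\<bar> \<le> \<epsilon> * h^2 * (2 * norm u + norm v)"
      and a2: "\<bar>D - h^2 * B\<bar> \<le> \<epsilon> * h^2 * (2 * norm v + norm u)"
      using h1[OF hp(1)] h2[OF hp(2)] unfolding D_def by (auto simp: algebra_simps)
    have "h^2 * \<bar>A - B\<bar> = \<bar>(D - h^2 * B) - (D - h^2 * A)\<bar>"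
    proof -
      have e: "(D - h^2 * B) - (D - h^2 * A) = h^2 * (A - B)" by (simp add: algebra_simps)
      show ?thesis unfolding e abs_mult by simp
    qed
    also have "\<dots> \<le> \<epsilon> * h^2 * (2 * norm u + norm v) + \<epsilon> * h^2 * (2 * norm v + norm u)"
      using a1 a2 by linarith
    also have "\<dots> = h^2 * (\<epsilon> * (3 * (norm u + norm v)))" by (simp add: algebra_simps)
    also have "\<dots> \<le> h^2 * (\<epsilon> * C)" unfolding C_def using ep by (intro mult_left_mono) auto
    finally have "h^2 * \<bar>A - B\<bar> \<le> h^2 * (\<epsilon> * C)" .
    moreover have "h^2 > 0" using hp by simp
    ultimately show "\<bar>A - B\<bar> \<le> \<epsilon> * C" by (rule mult_left_le_imp_le)
  qed
  then have "A = B" by linarith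
  then show ?thesis unfolding A_def B_def .
qed

lemma pd_eq: "pd i f = (\<lambda>y. frechet_derivative f (at y) (axis i 1))"
  by (fact pd_def)

lemma smooth_diff: assumes "smooth f" shows "f differentiable (at x)"
proof -
  have "foldr pd [] f differentiable (at x)" using assms unfolding smooth_def by blast
  then show ?thesis by simp
qed

lemma smooth_pd: assumes "smooth f" shows "smooth (pd i f)"
  unfolding smooth_def
proof (intro allI)
  fix "is" x
  have "foldr pd (is @ [i]) f differentiable (at x)" using assms unfolding smooth_def by blast
  then show "foldr pd is (pd i f) differentiable (at x)" by simp
qed

lemma schwarz:
  assumes "smooth f" shows "pd i (pd j f) = pd j (pd i f)"
proof (rule ext)
  fix x
  have d: "\<And>y. f differentiable (at y)" using smooth_diff[OF assms] .
  have di: "(\<lambda>y. frechet_derivative f (at y) (axis i 1)) differentiable (at x)"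
    using smooth_diff[OF smooth_pd[OF assms, of i]] unfolding pd_eq .
  have dj: "(\<lambda>y. frechet_derivative f (at y) (axis j 1)) differentiable (at x)"
    using smooth_diff[OF smooth_pd[OF assms, of j]] unfolding pd_eq .
  show "pd i (pd j f) x = pd j (pd i f) x"
    unfolding pd_eq using schwarz_gen[OF d dj di] by simp
qed



lemma pd_lin:
  assumes "\<And>x. f differentiable (at x)" "\<And>x. g differentiable (at x)"
  shows "pd i (\<lambda>x. a * f x + b * g x) = (\<lambda>x. a * pd i f x + b * pd i g x)"
proof (rule ext)
  fix x
  have hf: "(f has_derivative frechet_derivative f (at x)) (at x)"
    using assms(1) frechet_derivative_works by blast
  have hg: "(g has_derivative frechet_derivative g (at x)) (at x)"
    using assms(2) frechet_derivative_works by blast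
  have "((\<lambda>x. a * f x + b * g x) has_derivative
        (\<lambda>h. a * frechet_derivative f (at x) h + b * frechet_derivative g (at x) h)) (at x)"
    by (intro has_derivative_add has_derivative_mult_right hf hg)
  from frechet_derivative_at[OF this] show "pd i (\<lambda>x. a * f x + b * g x) x = a * pd i f x + b * pd i g x"
    unfolding pd_def by (metis (no_types, lifting))
qed

lemma foldr_lin:
  assumes "smooth f" "smooth g"
  shows "foldr pd is (\<lambda>x. a * f x + b * g x) = (\<lambda>x. a * foldr pd is f x + b * foldr pd is g x)"
proof (induction "is")
  case Nil then show ?case by simp
next
  case (Cons i "is")
  have "foldr pd (i # is) (\<lambda>x. a * f x + b * g x) = pd i (\<lambda>x. a * foldr pd is f x + b * foldr pd is g x)"
    using Cons by simp
  also have "\<dots> = (\<lambda>x. a * pd i (foldr pd is f) x + b * pd i (foldr pd is g) x)"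
    using assms unfolding smooth_def by (intro pd_lin) auto
  finally show ?case by simp
qed

lemma smooth_lin:
  assumes "smooth f" "smooth g"
  shows "smooth (\<lambda>x. a * f x + b * g x)"
  unfolding smooth_def
proof (intro allI)
  fix "is" x
  have "(\<lambda>x. a * foldr pd is f x + b * foldr pd is g x) differentiable (at x)"
    using assms unfolding smooth_def by (intro differentiable_add differentiable_mult differentiable_const) auto
  then show "foldr pd is (\<lambda>x. a * f x + b * g x) differentiable (at x)"
    by (simp add: foldr_lin[OF assms])
qed

lemma smooth_add: "smooth f \<Longrightarrow> smooth g \<Longrightarrow> smooth (\<lambda>x. f x + g x)"
  using smooth_lin[of f g 1 1] by simp

lemma smooth_minus: "smooth f \<Longrightarrow> smooth g \<Longrightarrow> smooth (\<lambda>x. f x - g x)"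
  using smooth_lin[of f g 1 "-1"] by simp

lemma smooth_cmul: "smooth f \<Longrightarrow> smooth (\<lambda>x. c * f x)"
  using smooth_lin[of f f c 0] by simp

lemma pd_minus:
  assumes "smooth f" "smooth g"
  shows "pd i (\<lambda>x. f x - g x) = (\<lambda>x. pd i f x - pd i g x)"
  using pd_lin[of f g i 1 "-1"] smooth_diff[OF assms(1)] smooth_diff[OF assms(2)] by simp

lemma pd_zero: "pd i (\<lambda>x. 0) = (\<lambda>x. 0)"
  unfolding pd_def by simp

lemma foldr_zero: "foldr pd is (\<lambda>x. 0) = (\<lambda>x. 0)"
  by (induction "is") (simp_all add: pd_zero)

lemma smooth_zero: "smooth (\<lambda>x. 0)"
  unfolding smooth_def foldr_zero by simp

lemma grad_comp: "(\<lambda>x. grad f x $ i) = pd i f"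
  unfolding grad_def by simp

lemma curl_comp:
  "(\<lambda>x. curl F x $ 1) = (\<lambda>x. pd 2 (\<lambda>y. F y $ 3) x - pd 3 (\<lambda>y. F y $ 2) x)"
  "(\<lambda>x. curl F x $ 2) = (\<lambda>x. pd 3 (\<lambda>y. F y $ 1) x - pd 1 (\<lambda>y. F y $ 3) x)"
  "(\<lambda>x. curl F x $ 3) = (\<lambda>x. pd 1 (\<lambda>y. F y $ 2) x - pd 2 (\<lambda>y. F y $ 1) x)"
  unfolding curl_def by simp_all

lemma curl_grad: "smooth f \<Longrightarrow> curl (grad f) = (\<lambda>x. 0)"
  unfolding curl_def grad_comp
  by (auto simp: fun_eq_iff vec_eq_iff forall_3 schwarz[of f 2 3] schwarz[of f 3 1] schwarz[of f 1 2])

lemma dvg_curl: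
  assumes "\<forall>j. smooth (\<lambda>x. F x $ j)"
  shows "dvg (curl F) = (\<lambda>x. 0)"
proof -
  have s: "smooth (\<lambda>x. F x $ j)" for j using assms by blast
  have sp: "smooth (pd i (\<lambda>x. F x $ j))" for i j using smooth_pd[OF s] .
  show ?thesis
    unfolding dvg_def curl_comp
    unfolding pd_minus[OF sp sp]
    by (simp add: fun_eq_iff schwarz[OF s])
qed



definition step :: "nat \<Rightarrow> nat \<Rightarrow> bool" where
  "step i j \<longleftrightarrow> ((i = 0 \<or> i = 3) \<and> (j = 0 \<or> j = 1)) \<or> (i = 1 \<and> j = 3) \<or> (i = 2 \<and> j = 2)"

fun ok :: "nat list \<Rightarrow> bool" where
  "ok [] = True"
| "ok [i] = (i \<le> 3)"
| "ok (i # j # r) = (step i j \<and> ok (j # r))"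

lemma admissible_single: "admissible [i] \<longleftrightarrow> i \<le> 3"
  unfolding admissible_def by auto

lemma admissible_Cons2:
  "admissible (i # j # r) \<longleftrightarrow> i \<le> 3 \<and> cod_vec i = dom_vec j \<and> admissible (j # r)"
proof -
  have a: "(\<forall>k. Suc k < length (i#j#r) \<longrightarrow> cod_vec ((i#j#r)!k) = dom_vec ((i#j#r)!Suc k))
    \<longleftrightarrow> cod_vec i = dom_vec j \<and>
        (\<forall>k. Suc k < length (j#r) \<longrightarrow> cod_vec ((j#r)!k) = dom_vec ((j#r)!Suc k))"
  proof
    assume H: "\<forall>k. Suc k < length (i#j#r) \<longrightarrow> cod_vec ((i#j#r)!k) = dom_vec ((i#j#r)!Suc k)"
    have "cod_vec i = dom_vec j" using H[rule_format, of 0] by simp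
    moreover have "\<forall>k. Suc k < length (j#r) \<longrightarrow> cod_vec ((j#r)!k) = dom_vec ((j#r)!Suc k)"
    proof (intro allI impI)
      fix k assume "Suc k < length (j#r)"
      then show "cod_vec ((j#r)!k) = dom_vec ((j#r)!Suc k)"
        using H[rule_format, of "Suc k"] by simp
    qed
    ultimately show "cod_vec i = dom_vec j \<and>
        (\<forall>k. Suc k < length (j#r) \<longrightarrow> cod_vec ((j#r)!k) = dom_vec ((j#r)!Suc k))" by blast
  next
    assume H: "cod_vec i = dom_vec j \<and>
        (\<forall>k. Suc k < length (j#r) \<longrightarrow> cod_vec ((j#r)!k) = dom_vec ((j#r)!Suc k))"
    show "\<forall>k. Suc k < length (i#j#r) \<longrightarrow> cod_vec ((i#j#r)!k) = dom_vec ((i#j#r)!Suc k)"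
    proof (intro allI impI)
      fix k assume k: "Suc k < length (i#j#r)"
      show "cod_vec ((i#j#r)!k) = dom_vec ((i#j#r)!Suc k)"
      proof (cases k)
        case 0 then show ?thesis using H by simp
      next
        case (Suc m) then show ?thesis using H k by simp
      qed
    qed
  qed
  show ?thesis unfolding admissible_def a by auto
qed

lemma ok_adm: "ok is \<Longrightarrow> admissible is"
proof (induction "is" rule: ok.induct)
  case 1 then show ?case by (simp add: admissible_def)
next
  case (2 i) then show ?case by (simp add: admissible_single)
next
  case (3 i j r)
  then have "step i j" "ok (j # r)" by auto
  then show ?case using 3 admissible_Cons2
    by (auto simp: step_def cod_vec_def dom_vec_def)
qed

definition T :: "nat \<Rightarrow> nat \<Rightarrow> nat list set" where
  "T n i = {xs. length xs = n \<and> ok (i # xs)}"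

lemma T_finite: "finite (T n i)"
proof (rule finite_subset)
  show "T n i \<subseteq> {xs. set xs \<subseteq> {0..3} \<and> length xs = n}"
  proof
    fix xs assume "xs \<in> T n i"
    then have "admissible (i # xs)" "length xs = n" unfolding T_def using ok_adm by auto
    then show "xs \<in> {xs. set xs \<subseteq> {0..3} \<and> length xs = n}" unfolding admissible_def by auto
  qed
  show "finite {xs. set xs \<subseteq> {0..(3::nat)} \<and> length xs = n}"
    by (rule finite_lists_length_eq) simp
qed

lemma T0: "T 0 i = (if i \<le> 3 then {[]} else {})"
  unfolding T_def by auto

lemma TS: "T (Suc n) i = {j # r | j r. step i j \<and> r \<in> T n j}"
  unfolding T_def by (auto simp: length_Suc_conv)

lemma TS0: "T (Suc n) 0 = Cons 0 ` T n 0 \<union> Cons 1 ` T n 1"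
  unfolding TS by (auto simp: step_def)
lemma TS3: "T (Suc n) 3 = Cons 0 ` T n 0 \<union> Cons 1 ` T n 1"
  unfolding TS by (auto simp: step_def)
lemma TS1: "T (Suc n) 1 = Cons 3 ` T n 3"
  unfolding TS by (auto simp: step_def)
lemma TS2: "T (Suc n) 2 = Cons 2 ` T n 2"
  unfolding TS by (auto simp: step_def)

lemma card_Cons: "card (Cons a ` A) = card A"
  by (rule card_image) (simp add: inj_on_def)

lemma card2: "finite A \<Longrightarrow> finite B \<Longrightarrow> a \<noteq> b \<Longrightarrow>
  card (Cons a ` A \<union> Cons b ` B) = card A + card B"
  by (subst card_Un_disjoint) (auto simp: card_Cons)

lemma cnt: "card (T n 0) = fib (n+2) \<and> card (T n 3) = fib (n+2) \<and> card (T n 1) = fib (n+1) \<and> card (T n 2) = 1"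
proof (induction n)
  case 0 then show ?case by (simp add: T0)
next
  case (Suc n)
  have c: "card (Cons 0 ` T n 0 \<union> Cons 1 ` T n 1) = fib (n+2) + fib (n+1)"
    using card2[OF T_finite T_finite, of 0 1 n 0 n 1] Suc by simp
  have c0: "card (T (Suc n) 0) = fib (n+2) + fib (n+1)" unfolding TS0 using c .
  have c3: "card (T (Suc n) 3) = fib (n+2) + fib (n+1)" unfolding TS3 using c .
  have c1: "card (T (Suc n) 1) = card (T n 3)" unfolding TS1 card_Cons ..
  have c2: "card (T (Suc n) 2) = card (T n 2)" unfolding TS2 card_Cons ..
  show ?case
    using Suc c0 c1 c2 c3 by simp
qed

lemma total: "card {is. length is = Suc n \<and> ok is} = fib (n + 4) + 1"
proof -
  have e: "{is. length is = Suc n \<and> ok is} =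
     (Cons 0 ` T n 0 \<union> Cons 1 ` T n 1) \<union> (Cons 2 ` T n 2 \<union> Cons 3 ` T n 3)"
  proof
    show "{is. length is = Suc n \<and> ok is} \<subseteq> (Cons 0 ` T n 0 \<union> Cons 1 ` T n 1) \<union> (Cons 2 ` T n 2 \<union> Cons 3 ` T n 3)"
    proof
      fix xs assume "xs \<in> {is. length is = Suc n \<and> ok is}"
      then obtain i r where xs: "xs = i # r" "length r = n" "ok (i # r)"
        by (auto simp: length_Suc_conv)
      then have "i \<le> 3" using ok_adm admissible_def by fastforce
      then have "i = 0 \<or> i = 1 \<or> i = 2 \<or> i = 3" by auto
      then show "xs \<in> (Cons 0 ` T n 0 \<union> Cons 1 ` T n 1) \<union> (Cons 2 ` T n 2 \<union> Cons 3 ` T n 3)"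
        using xs unfolding T_def by auto
    qed
  next
    show "(Cons 0 ` T n 0 \<union> Cons 1 ` T n 1) \<union> (Cons 2 ` T n 2 \<union> Cons 3 ` T n 3) \<subseteq> {is. length is = Suc n \<and> ok is}"
      unfolding T_def by auto
  qed
  have f: "finite (Cons a ` T n b)" for a b using T_finite by simp
  have "card ((Cons 0 ` T n 0 \<union> Cons 1 ` T n 1) \<union> (Cons 2 ` T n 2 \<union> Cons 3 ` T n 3))
      = card (Cons 0 ` T n 0 \<union> Cons 1 ` T n 1) + card (Cons 2 ` T n 2 \<union> Cons 3 ` T n 3)"
    by (rule card_Un_disjoint) (use f in auto)
  also have "\<dots> = (card (T n 0) + card (T n 1)) + (card (T n 2) + card (T n 3))"
    using card2[OF T_finite T_finite, of 0 1 n 0 n 1] card2[OF T_finite T_finite, of 2 3 n 2 n 3] by simp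
  also have "\<dots> = fib (n + 4) + 1"
    using cnt[of n] by (simp add: numeral_eq_Suc)
  finally show ?thesis using e by simp
qed



lemma has_der_exp:
  "((\<lambda>x. c * exp (a \<bullet> x)) has_derivative (\<lambda>h. (c * exp (a \<bullet> x)) * (a \<bullet> h))) (at x)"
proof -
  have i: "((\<lambda>x. a \<bullet> x) has_derivative (\<lambda>h. a \<bullet> h)) (at x)"
    by (rule has_derivative_inner_right[OF has_derivative_ident])
  have e: "(exp has_real_derivative exp (a \<bullet> x)) (at (a \<bullet> x))" by (rule DERIV_exp)
  have "((\<lambda>x. exp (a \<bullet> x)) has_derivative (\<lambda>h. exp (a \<bullet> x) * (a \<bullet> h))) (at x)"
    using has_derivative_compose[OF i e[unfolded has_field_derivative_def]] by (simp add: o_def)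
  then show ?thesis using has_derivative_mult_right[of _ _ _ c] by (simp add: mult.assoc)
qed

lemma pd_exp: "pd i (\<lambda>x. c * exp (a \<bullet> x)) = (\<lambda>x. (c * a $ i) * exp (a \<bullet> x))"
proof (rule ext)
  fix x
  show "pd i (\<lambda>x. c * exp (a \<bullet> x)) x = (c * a $ i) * exp (a \<bullet> x)"
    unfolding pd_def frechet_derivative_at[OF has_der_exp, symmetric]
    by (simp add: inner_axis)
qed

lemma comm_exp: "(\<lambda>x. exp (a \<bullet> x) * c) = (\<lambda>x. c * exp (a \<bullet> x))"
  by (rule ext) (rule mult.commute)

lemma pd_exp': "pd i (\<lambda>x. exp (a \<bullet> x) * c) = (\<lambda>x. (c * a $ i) * exp (a \<bullet> x))"
  unfolding comm_exp by (rule pd_exp)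

lemma foldr_exp: "foldr pd is (\<lambda>x. c * exp (a \<bullet> x)) = (\<lambda>x. (c * prod_list (map (\<lambda>i. a $ i) is)) * exp (a \<bullet> x))"
proof (induction "is")
  case Nil then show ?case by simp
next
  case (Cons i "is")
  have "foldr pd (i # is) (\<lambda>x. c * exp (a \<bullet> x)) = pd i (foldr pd is (\<lambda>x. c * exp (a \<bullet> x)))"
    by simp
  also have "\<dots> = pd i (\<lambda>x. (c * prod_list (map (\<lambda>i. a $ i) is)) * exp (a \<bullet> x))"
    by (simp only: Cons.IH)
  also have "\<dots> = (\<lambda>x. ((c * prod_list (map (\<lambda>i. a $ i) is)) * a $ i) * exp (a \<bullet> x))"
    by (rule pd_exp)
  finally show ?case by (simp add: mult_ac)
qed

lemma smooth_exp: "smooth (\<lambda>x. c * exp (a \<bullet> x))"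
  unfolding smooth_def foldr_exp differentiable_def using has_der_exp by blast

lemma smooth_exp': "smooth (\<lambda>x. exp (a \<bullet> x) * c)"
  unfolding comm_exp by (rule smooth_exp)

definition Ef :: "real^3 \<Rightarrow> real \<Rightarrow> fld" where "Ef a s = Sc (\<lambda>x. s * exp (a \<bullet> x))"
definition Vf :: "real^3 \<Rightarrow> real^3 \<Rightarrow> fld" where "Vf a v = Ve (\<lambda>x. exp (a \<bullet> x) *\<^sub>R v)"
definition crs :: "real^3 \<Rightarrow> real^3 \<Rightarrow> real^3" where
  "crs a v = vector [a$2* v$3 - a$3* v$2, a$3* v$1 - a$1* v$3, a$1* v$2 - a$2* v$1]"

lemma nab:
  "nabla e 0 (Sc f) = Sc (\<lambda>x. grad f x \<bullet> e)"
  "nabla e 1 (Sc f) = Ve (grad f)"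
  "nabla e 2 (Ve F) = Ve (curl F)"
  "nabla e 3 (Ve F) = Sc (dvg F)"
  by (simp_all add: numeral_eq_Suc)

lemma inA_Ef: "in_A (Ef a s)"
  unfolding Ef_def by (simp add: smooth_exp)

lemma inA_Vf: "in_A (Vf a v)"
  unfolding Vf_def by (simp add: smooth_exp')

lemma grad_exp: "grad (\<lambda>x. c * exp (a \<bullet> x)) = (\<lambda>x. exp (a \<bullet> x) *\<^sub>R (c *\<^sub>R a))"
  unfolding grad_def pd_exp by (simp add: fun_eq_iff vec_eq_iff mult_ac)

lemma inner3: "(u::real^3) \<bullet> v = u$1 * v$1 + u$2 * v$2 + u$3 * v$3"
  by (simp add: inner_vec_def sum_3)

lemma nab_EE0: "nabla e 0 (Ef a s) = Ef a (s * (a \<bullet> e))"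
  unfolding Ef_def nab grad_exp by (simp add: fun_eq_iff mult_ac)

lemma nab_EE1: "nabla e 1 (Ef a s) = Vf a (s *\<^sub>R a)"
  unfolding Ef_def Vf_def nab grad_exp by simp

lemma nab_EV2: "nabla e 2 (Vf a v) = Vf a (crs a v)"
  unfolding Vf_def nab
  by (simp add: curl_def crs_def pd_exp pd_exp' fun_eq_iff vec_eq_iff forall_3 algebra_simps)

lemma nab_EV3: "nabla e 3 (Vf a v) = Ef a (a \<bullet> v)"
  unfolding Vf_def Ef_def nab
  by (simp add: dvg_def pd_exp pd_exp' fun_eq_iff inner3[of a v] algebra_simps)

lemma nz_EE: "nonzero (Ef a s) \<longleftrightarrow> s \<noteq> 0"
  unfolding Ef_def by auto

lemma nz_EV: "nonzero (Vf a v) \<longleftrightarrow> v \<noteq> 0"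
  unfolding Vf_def by auto

lemma lagrange:
  fixes p q r x y z :: real
  shows "(q*z - r*y)^2 + (r*x - p*z)^2 + (p*y - q*x)^2 + (p*x+q*y+r*z)^2
    = (p^2+q^2+r^2) * (x^2+y^2+z^2)"
  by (simp add: power2_eq_square algebra_simps)

lemma crs_crs: assumes "crs a w \<noteq> 0" shows "crs a (crs a w) \<noteq> 0"
proof
  define u where "u = crs a w"
  assume z: "crs a (crs a w) = 0"
  have u: "u$1 = a$2* w$3 - a$3* w$2" "u$2 = a$3* w$1 - a$1* w$3" "u$3 = a$1* w$2 - a$2* w$1"
    unfolding u_def crs_def by simp_all
  have dot: "a$1* u$1 + a$2* u$2 + a$3* u$3 = 0" unfolding u by (simp add: algebra_simps)
  have c: "a$2* u$3 - a$3* u$2 = 0" "a$3* u$1 - a$1* u$3 = 0" "a$1* u$2 - a$2* u$1 = 0"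
    using z unfolding u_def[symmetric] by (simp_all add: crs_def vec_eq_iff forall_3)
  have "(a$1^2+a$2^2+a$3^2) * (u$1^2+u$2^2+u$3^2) = 0"
    using lagrange[where p="a$1" and q="a$2" and r="a$3" and x="u$1" and y="u$2" and z="u$3"] dot c by simp
  then have "a$1^2+a$2^2+a$3^2 = 0 \<or> u$1^2+u$2^2+u$3^2 = 0" by simp
  then have "(a$1 = 0 \<and> a$2 = 0 \<and> a$3 = 0) \<or> (u$1 = 0 \<and> u$2 = 0 \<and> u$3 = 0)"
    by (metis sum_power2_eq_zero_iff add_nonneg_eq_0_iff zero_le_power2 add_nonneg_nonneg)
  then show False
  proof
    assume "a$1 = 0 \<and> a$2 = 0 \<and> a$3 = 0"
    then have "crs a w = 0" by (simp add: crs_def vec_eq_iff forall_3)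
    then show False using assms by simp
  next
    assume "u$1 = 0 \<and> u$2 = 0 \<and> u$3 = 0"
    then have "u = 0" by (simp add: vec_eq_iff forall_3)
    then show False using assms u_def by simp
  qed
qed



lemma compose_Nil: "compose e [] g = g" by (simp add: compose_def)
lemma compose_Cons: "compose e (i # r) g = compose e r (nabla e i g)" by (simp add: compose_def)

definition Z :: "fld \<Rightarrow> bool" where "Z g \<longleftrightarrow> g = Sc (\<lambda>x. 0) \<or> g = Ve (\<lambda>x. 0)"

lemma grad_zero: "grad (\<lambda>x. 0) = (\<lambda>x. 0)"
  unfolding grad_def pd_zero by (simp add: fun_eq_iff vec_eq_iff)

lemma curl_zero: "curl (\<lambda>x. 0) = (\<lambda>x. 0)"
  unfolding curl_def by (simp add: pd_zero fun_eq_iff vec_eq_iff forall_3)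

lemma dvg_zero: "dvg (\<lambda>x. 0) = (\<lambda>x. 0)"
  unfolding dvg_def by (simp add: pd_zero fun_eq_iff)

lemma nabla_big: "i \<ge> 4 \<Longrightarrow> nabla e i g = g"
proof -
  assume "i \<ge> 4"
  define m where "m = i - 4"
  have "i = Suc (Suc (Suc (Suc m)))" unfolding m_def using \<open>4 \<le> i\<close> by arith
  then show ?thesis by (cases g) simp_all
qed

lemma nabla_cases: "i = 0 \<or> i = 1 \<or> i = 2 \<or> i = 3 \<or> i \<ge> (4::nat)" by auto

lemma nabla_other:
  "nabla e 2 (Sc f) = Sc f" "nabla e 3 (Sc f) = Sc f" "nabla e 0 (Ve F) = Ve F" "nabla e 1 (Ve F) = Ve F"
  by (simp_all add: numeral_eq_Suc)

lemma Z_nabla: "Z g \<Longrightarrow> Z (nabla e i g)"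
  unfolding Z_def
  using nabla_cases[of i]
  by (auto simp: nab nabla_other nabla_big grad_zero curl_zero dvg_zero)

lemma Z_compose: "Z g \<Longrightarrow> Z (compose e r g)"
  by (induction r arbitrary: g) (simp_all add: compose_Nil compose_Cons Z_nabla)

lemma Z_nonzero: "Z g \<Longrightarrow> \<not> nonzero g"
  unfolding Z_def by auto

lemma dir_eq: "(\<lambda>x. grad f x \<bullet> e) = (\<lambda>x. e$1 * pd 1 f x + e$2 * pd 2 f x + e$3 * pd 3 f x)"
  by (simp add: fun_eq_iff inner3 grad_def mult.commute)

lemma nabla_type:
  assumes "i \<le> 3" "in_A g" "is_vec g = dom_vec i"
  shows "in_A (nabla e i g) \<and> is_vec (nabla e i g) = cod_vec i"
proof (cases g)
  case (Sc f)
  then have s: "smooth f" and i: "i = 0 \<or> i = 1" using assms by (auto simp: dom_vec_def)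
  from i show ?thesis
  proof
    assume "i = 0"
    then show ?thesis using Sc s
      by (simp add: nab dir_eq cod_vec_def smooth_add smooth_cmul smooth_pd)
  next
    assume "i = 1"
    then show ?thesis using Sc s
      by (simp add: nab grad_comp cod_vec_def smooth_pd)
  qed
next
  case (Ve F)
  then have s: "\<And>j. smooth (\<lambda>x. F x $ j)" and i: "i = 2 \<or> i = 3" using assms by (auto simp: dom_vec_def)
  from i show ?thesis
  proof
    assume "i = 2"
    have "\<forall>j. smooth (\<lambda>x. curl F x $ j)"
      unfolding forall_3 curl_comp by (simp add: smooth_minus smooth_pd s)
    then show ?thesis using Ve \<open>i = 2\<close> by (simp add: nab cod_vec_def)
  next
    assume "i = 3"
    have "smooth (dvg F)"
      unfolding dvg_def by (simp add: smooth_add smooth_pd s)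
    then show ?thesis using Ve \<open>i = 3\<close> by (simp add: nab cod_vec_def)
  qed
qed

lemma adm_le3: "admissible (i # r) \<Longrightarrow> i \<le> 3"
  unfolding admissible_def by auto

lemma triv:
  "admissible is \<Longrightarrow> \<not> ok is \<Longrightarrow> in_A g \<Longrightarrow> is_vec g = dom_vec (hd is) \<Longrightarrow> Z (compose e is g)"
proof (induction "is" arbitrary: g rule: ok.induct)
  case 1 then show ?case by simp
next
  case (2 i) then show ?case by (simp add: admissible_single)
next
  case (3 i j r)
  have a: "i \<le> 3" "cod_vec i = dom_vec j" "admissible (j # r)"
    using "3.prems"(1) admissible_Cons2 by auto
  have j3: "j \<le> 3" using adm_le3[OF a(3)] .
  have nt: "in_A (nabla e i g) \<and> is_vec (nabla e i g) = cod_vec i"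
    using nabla_type[OF a(1) "3.prems"(3)] "3.prems"(4) by simp
  show ?case
  proof (cases "step i j")
    case True
    then have "\<not> ok (j # r)" using "3.prems"(2) by simp
    then have "Z (compose e (j # r) (nabla e i g))"
      using "3.IH" a(3) nt a(2) by simp
    then show ?thesis by (simp add: compose_Cons)
  next
    case False
    then have "(i = 1 \<and> j = 2) \<or> (i = 2 \<and> j = 3)"
      using a j3 by (auto simp: step_def cod_vec_def dom_vec_def)
    then show ?thesis
    proof
      assume ij: "i = 1 \<and> j = 2"
      then have "\<not> is_vec g" using "3.prems"(4) by (simp add: dom_vec_def)
      then obtain f where g: "g = Sc f" by (cases g) auto
      then have sf: "smooth f" using "3.prems"(3) by simp
      have "nabla e j (nabla e i g) = Ve (curl (grad f))" using ij g by (simp only: nab)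
      then have "nabla e j (nabla e i g) = Ve (\<lambda>x. 0)" using curl_grad[OF sf] by (simp only:)
      then have "Z (nabla e j (nabla e i g))" by (simp add: Z_def)
      then show ?thesis by (simp add: compose_Cons Z_compose)
    next
      assume ij: "i = 2 \<and> j = 3"
      then have "is_vec g" using "3.prems"(4) by (simp add: dom_vec_def)
      then obtain F where g: "g = Ve F" by (cases g) auto
      then have sF: "\<forall>j. smooth (\<lambda>x. F x $ j)" using "3.prems"(3) by simp
      have "nabla e j (nabla e i g) = Sc (dvg (curl F))" using ij g by (simp only: nab)
      then have "nabla e j (nabla e i g) = Sc (\<lambda>x. 0)" using dvg_curl[OF sF] by (simp only:)
      then have "Z (nabla e j (nabla e i g))" by (simp add: Z_def)
      then show ?thesis by (simp add: compose_Cons Z_compose)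
    qed
  qed
qed

lemma nab_EE1': "nabla e (Suc 0) (Ef a s) = Vf a (s *\<^sub>R a)"
  using nab_EE1 by simp

lemma is_vec_EfVf [simp]: "is_vec (Ef a s) = False" "is_vec (Vf a v) = True"
  by (simp_all add: Ef_def Vf_def)

lemma Ef_inj: "Ef a s = Ef a t \<longleftrightarrow> s = t"
proof
  assume "Ef a s = Ef a t"
  then have "(\<lambda>x. s * exp (a \<bullet> x)) = (\<lambda>x. t * exp (a \<bullet> x))" by (simp add: Ef_def)
  from fun_cong[OF this, of 0] show "s = t" by simp
qed simp

lemma Vf_inj: "Vf a v = Vf a w \<longleftrightarrow> v = w"
proof
  assume "Vf a v = Vf a w"
  then have "(\<lambda>x. exp (a \<bullet> x) *\<^sub>R v) = (\<lambda>x. exp (a \<bullet> x) *\<^sub>R w)" by (simp add: Vf_def)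
  from fun_cong[OF this, of 0] show "v = w" by simp
qed simp



definition Good :: "real^3 \<Rightarrow> nat \<Rightarrow> fld \<Rightarrow> bool" where
  "Good e i st \<longleftrightarrow> (if i \<le> 1 then (\<exists>s. s \<noteq> 0 \<and> st = Ef e s)
     else if i = 2 then (\<exists>v. crs e v \<noteq> 0 \<and> st = Vf e v)
     else (\<exists>v. e \<bullet> v \<noteq> 0 \<and> st = Vf e v))"

lemma Good_Ef: "j \<le> 1 \<Longrightarrow> s \<noteq> 0 \<Longrightarrow> Good e j (Ef e s)"
  unfolding Good_def by (auto intro!: exI[of _ s])

lemma Good_V3: "e \<bullet> w \<noteq> 0 \<Longrightarrow> Good e 3 (Vf e w)"
  unfolding Good_def by (auto intro!: exI[of _ w])

lemma Good_V2: "crs e w \<noteq> 0 \<Longrightarrow> Good e 2 (Vf e w)"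
  unfolding Good_def by (auto intro!: exI[of _ w])

lemma wit:
  assumes e1: "e \<bullet> e = 1"
  shows "ok is \<Longrightarrow> is \<noteq> [] \<Longrightarrow> Good e (hd is) st \<Longrightarrow> nonzero (compose e is st)"
proof (induction "is" arbitrary: st rule: ok.induct)
  case 1 then show ?case by simp
next
  case (2 i)
  have e0: "e \<noteq> 0" using e1 by auto
  have "i = 0 \<or> i = 1 \<or> i = 2 \<or> i = 3" using "2.prems"(1) by auto
  then show ?case using "2.prems"(3) e0 e1
    by (auto simp: Good_def compose_Cons compose_Nil nab_EE0 nab_EE1 nab_EE1' nab_EV2 nab_EV3 nz_EE nz_EV)
next
  case (3 i j r)
  have sj: "step i j" and okr: "ok (j # r)" using "3.prems"(1) by auto
  have e0: "e \<noteq> 0" using e1 by auto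
  have P: "Good e i st" using "3.prems"(3) by simp
  have c: "(i = 0 \<or> i = 3) \<and> (j = 0 \<or> j = 1) \<or> (i = 1 \<and> j = 3) \<or> (i = 2 \<and> j = 2)"
    using sj unfolding step_def .
  have G: "Good e j (nabla e i st)"
  proof (cases "i = 0")
    case True
    then obtain s where s: "s \<noteq> 0" "st = Ef e s" using P by (auto simp: Good_def)
    have "nabla e i st = Ef e s" using True s e1 by (simp add: nab_EE0)
    moreover have "j \<le> 1" using c True by auto
    ultimately show ?thesis using Good_Ef s by simp
  next
    case F0: False
    show ?thesis
    proof (cases "i = 3")
      case True
      then obtain v where v: "e \<bullet> v \<noteq> 0" "st = Vf e v" using P by (auto simp: Good_def)
      have "nabla e i st = Ef e (e \<bullet> v)" using True v by (simp add: nab_EV3)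
      moreover have "j \<le> 1" using c True by auto
      ultimately show ?thesis using Good_Ef v by simp
    next
      case F3: False
      show ?thesis
      proof (cases "i = 1")
        case True
        then have j: "j = 3" using c by auto
        obtain s where s: "s \<noteq> 0" "st = Ef e s" using P True by (auto simp: Good_def)
        have "nabla e i st = Vf e (s *\<^sub>R e)" using True s by (simp add: nab_EE1 nab_EE1')
        moreover have "e \<bullet> (s *\<^sub>R e) \<noteq> 0" using s e1 by simp
        ultimately show ?thesis using Good_V3 j by simp
      next
        case False
        then have ij: "i = 2" "j = 2" using c F0 F3 by auto
        obtain v where v: "crs e v \<noteq> 0" "st = Vf e v" using P ij by (auto simp: Good_def)
        have "nabla e i st = Vf e (crs e v)" using ij v by (simp add: nab_EV2)
        then show ?thesis using Good_V2 crs_crs[OF v(1)] ij by simp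
      qed
    qed
  qed
  have "nonzero (compose e (j # r) (nabla e i st))"
    using "3.IH"[OF okr _ ] G by simp
  then show ?case by (simp add: compose_Cons)
qed

lemma crs_exists: assumes "e \<noteq> 0" shows "\<exists>v. crs e v \<noteq> 0"
proof (rule ccontr)
  assume "\<not> ?thesis"
  then have a: "crs e (axis 1 1) = 0" "crs e (axis 2 1) = 0" by auto
  have "e $ 1 = 0 \<and> e $ 2 = 0 \<and> e $ 3 = 0"
    using a by (simp add: crs_def vec_eq_iff forall_3 axis_def)
  then have "e = 0" by (simp add: vec_eq_iff forall_3)
  then show False using assms by simp
qed

lemma good_nontrivial:
  assumes e1: "e \<bullet> e = 1" and ok: "ok is" and ne: "is \<noteq> []"
  shows "nontrivial e is"
proof -
  have e0: "e \<noteq> 0" using e1 by auto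
  obtain i r where isd: "is = i # r" using ne by (cases "is") auto
  have i3: "i \<le> 3" using ok_adm[OF ok] adm_le3 isd by blast
  have "\<exists>g. in_A g \<and> is_vec g = dom_vec i \<and> Good e i g"
  proof -
    have "i = 0 \<or> i = 1 \<or> i = 2 \<or> i = 3" using i3 by auto
    then show ?thesis
    proof (elim disjE)
      assume "i = 0" then show ?thesis
        by (intro exI[of _ "Ef e 1"]) (auto simp: inA_Ef Good_def dom_vec_def intro!: exI)
    next
      assume "i = 1" then show ?thesis
        by (intro exI[of _ "Ef e 1"]) (auto simp: inA_Ef Good_def dom_vec_def intro!: exI)
    next
      assume i: "i = 2"
      obtain v where "crs e v \<noteq> 0" using crs_exists[OF e0] by blast
      then show ?thesis using i
        by (intro exI[of _ "Vf e v"]) (auto simp: inA_Vf Good_def dom_vec_def intro!: exI)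
    next
      assume i: "i = 3"
      then show ?thesis using e1
        by (intro exI[of _ "Vf e e"]) (auto simp: inA_Vf Good_def dom_vec_def intro!: exI)
    qed
  qed
  then obtain g where g: "in_A g" "is_vec g = dom_vec i" "Good e i g" by blast
  have "nonzero (compose e is g)" using wit[OF e1 ok ne] g isd by simp
  then show ?thesis unfolding nontrivial_def using g isd by auto
qed

theorem corollary1:
  fixes e :: "real^3" and k :: nat
  assumes "norm e = 1" and "k \<ge> 1"
  shows "card {is :: nat list. length is = k \<and> admissible is \<and> nontrivial e is}
           = fib (k + 3) + 1"
proof -
  have e1: "e \<bullet> e = 1" using assms(1) norm_eq_1 by blast
  obtain n where k: "k = Suc n" using assms(2) by (cases k) auto
  have "{is :: nat list. length is = k \<and> admissible is \<and> nontrivial e is} = {is. length is = Suc n \<and> ok is}"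
  proof (intro set_eqI iffI)
    fix xs assume "xs \<in> {is :: nat list. length is = k \<and> admissible is \<and> nontrivial e is}"
    then have x: "length xs = Suc n" "admissible xs" "nontrivial e xs" using k by auto
    have "ok xs"
    proof (rule ccontr)
      assume nok: "\<not> ok xs"
      obtain g where g: "in_A g" "is_vec g = dom_vec (hd xs)" "nonzero (compose e xs g)"
        using x(3) unfolding nontrivial_def by blast
      have "Z (compose e xs g)" using triv[OF x(2) nok g(1) g(2)] .
      then show False using g(3) Z_nonzero by blast
    qed
    then show "xs \<in> {is. length is = Suc n \<and> ok is}" using x by simp
  next
    fix xs assume "xs \<in> {is. length is = Suc n \<and> ok is}"
    then have x: "length xs = Suc n" "ok xs" by auto
    then have "xs \<noteq> []" by auto
    then show "xs \<in> {is :: nat list. length is = k \<and> admissible is \<and> nontrivial e is}"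
      using x k ok_adm good_nontrivial[OF e1] by auto
  qed
  then have "card {is :: nat list. length is = k \<and> admissible is \<and> nontrivial e is} = fib (n + 4) + 1"
    using total[of n] by simp
  moreover have "fib (k + 3) = fib (n + 4)" using k by (simp add: add.commute)
  ultimately show ?thesis by (simp only:)
qed


end
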